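(* Let $\varphi\in\mathfrak{sl}(2,\mathbb C)$ and consider the linear map $M_\varphi:i\mathfrak{su}(2)\to i\mathfrak{su}(2)$, $M_\varphi\gamma=[\varphi^*,[\varphi,\gamma]]+[\varphi,[\varphi^*,\gamma]]$. Then $M_\varphi$ is invertible if and only if $[\varphi,\varphi^*]\neq0$, i.e. if and only if $\varphi$ is not normal. If $[\varphi,\varphi^*]=0$ for some $0\ne\varphi\in\mathfrak{sl}(2,\mathbb C)$, then $M_\varphi$ has a one-dimensional kernel.
   Context: $i\mathfrak{su}(2)$ denotes the hermitian trace-free $2\times2$ complex matrices, and $\varphi^*$ is the conjugate transpose of $\varphi$. *)

theory Defs
  imports "HOL-Analysis.Analysis"
begin

type_synonym cmat2 = "complex^2^2"

definition ctransp :: "complex^'n^'n \<Rightarrow> complex^'n^'n" where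
  "ctransp A = (\<chi> i j. cnj (A $ j $ i))"

definition mcomm :: "complex^'n^'n \<Rightarrow> complex^'n^'n \<Rightarrow> complex^'n^'n" where
  "mcomm A B = A ** B - B ** A"

definition sl2C :: "cmat2 set" where
  "sl2C = {A. trace A = 0}"

text \<open>i su(2): hermitian trace-free 2x2 complex matrices (a real vector space).\<close>
definition isu2 :: "cmat2 set" where
  "isu2 = {A. ctransp A = A \<and> trace A = 0}"

definition Mop :: "cmat2 \<Rightarrow> cmat2 \<Rightarrow> cmat2" where
  "Mop \<phi> \<gamma> = mcomm (ctransp \<phi>) (mcomm \<phi> \<gamma>) + mcomm \<phi> (mcomm (ctransp \<phi>) \<gamma>)"

end

theory Submission
  imports Defs
begin


definition mk :: "complex \<Rightarrow> complex \<Rightarrow> complex \<Rightarrow> complex \<Rightarrow> cmat2" where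
  "mk a b c d = (\<chi> i j. if i=1 then (if j=1 then a else b) else (if j=1 then c else d))"

lemma mk_nth[simp]: "mk a b c d $ 1 $ 1 = a" "mk a b c d $ 1 $ 2 = b" "mk a b c d $ 2 $ 1 = c" "mk a b c d $ 2 $ 2 = d"
  by (simp_all add: mk_def)

lemma mk_eta: "(A::cmat2) = mk (A$1$1) (A$1$2) (A$2$1) (A$2$2)"
  unfolding mk_def vec_eq_iff forall_2 by simp

lemma mk_eq[simp]: "mk a b c d = mk a' b' c' d' \<longleftrightarrow> a=a' \<and> b=b' \<and> c=c' \<and> d=d'"
  unfolding mk_def vec_eq_iff forall_2 by simp

lemma mk_mult[simp]: "mk a b c d ** mk x y z w = mk (a*x+b*z) (a*y+b*w) (c*x+d*z) (c*y+d*w)"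
  unfolding matrix_matrix_mult_def mk_def vec_eq_iff forall_2 by (simp add: sum_2)

lemma mk_add[simp]: "mk a b c d + mk x y z w = mk (a+x) (b+y) (c+z) (d+w)"
  unfolding mk_def vec_eq_iff forall_2 by simp
lemma mk_diff[simp]: "mk a b c d - mk x y z w = mk (a-x) (b-y) (c-z) (d-w)"
  unfolding mk_def vec_eq_iff forall_2 by simp
lemma mk_scaleR[simp]: "r *\<^sub>R mk a b c d = mk (r*\<^sub>R a) (r*\<^sub>R b) (r*\<^sub>R c) (r*\<^sub>R d)"
  unfolding mk_def vec_eq_iff forall_2 by simp
lemma mk_zero: "0 = mk 0 0 0 0"
  unfolding mk_def vec_eq_iff forall_2 by simp
lemma mk_ctransp[simp]: "ctransp (mk a b c d) = mk (cnj a) (cnj c) (cnj b) (cnj d)"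
  unfolding ctransp_def mk_def vec_eq_iff forall_2 by simp
lemma mk_trace[simp]: "trace (mk a b c d) = a + d"
  unfolding trace_def by (simp add: sum_2)



lemma mk_cases: obtains a b c d where "(A::cmat2) = mk a b c d"
  using mk_eta by blast

lemma cnj_mult_self: "cnj z * z = complex_of_real ((cmod z)^2)"
  by (metis complex_norm_square mult.commute)

lemma trace_self_zero:
  fixes A B :: cmat2
  assumes "trace (ctransp A ** A) + trace (ctransp B ** B) = 0"
  shows "A = 0"
proof -
  obtain a b c d where A: "A = mk a b c d" by (rule mk_cases)
  obtain p q r s where B: "B = mk p q r s" by (rule mk_cases)
  have "a * cnj a + (b * cnj b + (c * cnj c + (d * cnj d + (p * cnj p + (q * cnj q + (r * cnj r + s * cnj s)))))) = 0"
    using assms unfolding A B by (simp add: algebra_simps)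
  hence "complex_of_real ((Re a^2 + Im a^2) + ((Re b^2 + Im b^2) + ((Re c^2 + Im c^2) + ((Re d^2 + Im d^2)
      + ((Re p^2 + Im p^2) + ((Re q^2 + Im q^2) + ((Re r^2 + Im r^2) + (Re s^2 + Im s^2)))))))) = 0"
    by (simp only: complex_mult_cnj of_real_add)
  hence "(Re a^2 + Im a^2) + ((Re b^2 + Im b^2) + ((Re c^2 + Im c^2) + ((Re d^2 + Im d^2)
      + ((Re p^2 + Im p^2) + ((Re q^2 + Im q^2) + ((Re r^2 + Im r^2) + (Re s^2 + Im s^2))))))) = 0"
    by (simp only: of_real_eq_0_iff)
  hence "Re a = 0 \<and> Im a = 0 \<and> Re b = 0 \<and> Im b = 0 \<and> Re c = 0 \<and> Im c = 0 \<and> Re d = 0 \<and> Im d = 0"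
    by (smt (verit) zero_le_power2 power_eq_0_iff)
  hence "a = 0 \<and> b = 0 \<and> c = 0 \<and> d = 0" by (simp add: complex_eq_iff)
  thus ?thesis using A mk_zero by simp
qed

lemma ctransp_mcomm: "ctransp (mcomm A B) = mcomm (ctransp B) (ctransp (A::cmat2))"
proof -
  obtain a b c d where A: "A = mk a b c d" by (rule mk_cases)
  obtain p q r s where B: "B = mk p q r s" by (rule mk_cases)
  show ?thesis unfolding A B mcomm_def by (simp add: algebra_simps)
qed

lemma isu2_iff: "A \<in> isu2 \<longleftrightarrow> (\<exists>x y. cnj x = x \<and> A = mk x y (cnj y) (-x))"
proof -
  obtain a b c d where A: "A = mk a b c d" by (rule mk_cases)
  show ?thesis unfolding A isu2_def
    by (auto simp: add_eq_0_iff2 complex_cnj_cancel_iff)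
qed

lemma mcomm_zero[simp]: "mcomm A (0::cmat2) = 0"
  unfolding mcomm_def by simp

lemma ker_iff:
  assumes "\<gamma> \<in> isu2"
  shows "Mop \<phi> \<gamma> = 0 \<longleftrightarrow> mcomm \<phi> \<gamma> = 0"
proof
  assume h: "mcomm \<phi> \<gamma> = 0"
  have "ctransp \<gamma> = \<gamma>" using assms by (simp add: isu2_def)
  have "ctransp (mcomm \<phi> \<gamma>) = 0" using h by (simp add: ctransp_def vec_eq_iff)
  hence "mcomm \<gamma> (ctransp \<phi>) = 0" using \<open>ctransp \<gamma> = \<gamma>\<close> by (simp add: ctransp_mcomm)
  hence "mcomm (ctransp \<phi>) \<gamma> = 0" unfolding mcomm_def by simp
  thus "Mop \<phi> \<gamma> = 0" using h unfolding Mop_def by simp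
next
  assume h: "Mop \<phi> \<gamma> = 0"
  obtain x y where g: "cnj x = x" "\<gamma> = mk x y (cnj y) (-x)" using assms isu2_iff by blast
  obtain a b c d where A: "\<phi> = mk a b c d" by (rule mk_cases)
  have "trace (\<gamma> ** Mop \<phi> \<gamma>) = trace (ctransp (mcomm \<phi> \<gamma>) ** mcomm \<phi> \<gamma>)
      + trace (ctransp (mcomm (ctransp \<phi>) \<gamma>) ** mcomm (ctransp \<phi>) \<gamma>)"
    unfolding A g(2) Mop_def mcomm_def using g(1) by (simp add: algebra_simps)
  hence "trace (ctransp (mcomm \<phi> \<gamma>) ** mcomm \<phi> \<gamma>)
      + trace (ctransp (mcomm (ctransp \<phi>) \<gamma>) ** mcomm (ctransp \<phi>) \<gamma>) = 0"
    using h by (simp add: g(2) trace_def)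
  thus "mcomm \<phi> \<gamma> = 0" by (rule trace_self_zero)
qed



lemma comm_iff: "mcomm (mk a b c (-a)) (mk x y z (-x)) = 0 \<longleftrightarrow> b*z = c*y \<and> a*y = b*x \<and> c*x = a*z"
  unfolding mcomm_def mk_zero by (auto simp: algebra_simps) 

lemma centralizer:
  assumes "\<not>(a = 0 \<and> b = 0 \<and> c = 0)" "b*z = c*y" "a*y = b*x" "c*x = (a::complex)*z"
  shows "\<exists>\<beta>. x = \<beta>*a \<and> y = \<beta>*b \<and> z = \<beta>*c"
proof (cases "a = 0")
  case False
  show ?thesis
    by (rule exI[of _ "x/a"]) (use False assms in \<open>auto simp: field_simps\<close>)
next
  case a: True
  show ?thesis
  proof (cases "b = 0")
    case False
    show ?thesis
      by (rule exI[of _ "y/b"]) (use a False assms in \<open>auto simp: field_simps\<close>)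
  next
    case True
    with a assms have "c \<noteq> 0" by auto
    show ?thesis
      by (rule exI[of _ "z/c"]) (use a True \<open>c\<noteq>0\<close> assms in \<open>auto simp: field_simps\<close>)
  qed
qed

lemma sR: "r *\<^sub>R (z::complex) = of_real r * z" by (simp add: scaleR_conv_of_real)

lemma ctransp_add: "ctransp (A + B) = ctransp A + ctransp (B::cmat2)"
  unfolding ctransp_def vec_eq_iff by simp
lemma ctransp_scaleR: "ctransp (r *\<^sub>R A) = r *\<^sub>R ctransp (A::cmat2)"
proof -
  obtain a b c d where A: "A = mk a b c d" by (rule mk_cases)
  show ?thesis unfolding A by (simp add: sR)
qed
lemma trace_add': "trace (A + B) = trace A + trace (B::cmat2)"
  unfolding trace_def by (simp add: sum.distrib)
lemma trace_scaleR: "trace (r *\<^sub>R A) = r *\<^sub>R trace (A::cmat2)"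
  unfolding trace_def by (simp add: scaleR_sum_right)

lemma subspace_isu2: "subspace isu2"
  unfolding subspace_def isu2_def
  by (auto simp: ctransp_add ctransp_scaleR trace_add' trace_scaleR)
     (simp_all add: ctransp_def trace_def vec_eq_iff)

lemma Mop_linear: "linear (Mop \<phi>)"
proof (rule linearI)
  fix x y
  obtain a b c d where A: "\<phi> = mk a b c d" by (rule mk_cases)
  obtain p q r s where B: "x = mk p q r s" by (rule mk_cases)
  obtain p' q' r' s' where C: "y = mk p' q' r' s'" by (rule mk_cases)
  show "Mop \<phi> (x + y) = Mop \<phi> x + Mop \<phi> y"
    unfolding A B C Mop_def mcomm_def by (simp add: algebra_simps)
next
  fix k :: real and x
  obtain a b c d where A: "\<phi> = mk a b c d" by (rule mk_cases)
  obtain p q r s where B: "x = mk p q r s" by (rule mk_cases)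
  show "Mop \<phi> (k *\<^sub>R x) = k *\<^sub>R Mop \<phi> x"
    unfolding A B Mop_def mcomm_def by (simp add: algebra_simps sR)
qed

lemma Mop_maps: assumes "\<gamma> \<in> isu2" shows "Mop \<phi> \<gamma> \<in> isu2"
proof -
  obtain x y where g: "cnj x = x" "\<gamma> = mk x y (cnj y) (-x)" using assms isu2_iff by blast
  obtain a b c d where A: "\<phi> = mk a b c d" by (rule mk_cases)
  show ?thesis unfolding isu2_def using g(1)
    unfolding A g(2) Mop_def mcomm_def by (simp add: algebra_simps)
qed



lemma normal_kernel:
  assumes "b*cnj b = c*cnj c" "a*cnj c = b*cnj a" "c*cnj a = a*cnj b" "\<not>(a = 0 \<and> b = 0 \<and> c = 0)"
  shows "\<exists>g. g \<in> isu2 \<and> g \<noteq> 0 \<and> mcomm (mk a b c (-a)) g = 0"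
proof (cases "a + cnj a = 0 \<and> b + cnj c = 0 \<and> c + cnj b = 0")
  case False
  let ?g = "mk (a + cnj a) (b + cnj c) (c + cnj b) (-(a + cnj a))"
  have "?g \<in> isu2" unfolding isu2_iff by (rule exI[of _ "a + cnj a"], rule exI[of _ "b + cnj c"]) simp
  moreover have "?g \<noteq> 0" using False by (simp add: mk_zero neg_eq_iff_add_eq_0) blast
  moreover have "mcomm (mk a b c (-a)) ?g = 0" unfolding comm_iff
    using assms(1-3) by (intro conjI; algebra)
  ultimately show ?thesis by blast
next
  case True
  let ?g = "mk (\<i>*(a - cnj a)) (\<i>*(b - cnj c)) (\<i>*(c - cnj b)) (-(\<i>*(a - cnj a)))"
  have "?g \<in> isu2" unfolding isu2_iff
    by (rule exI[of _ "\<i>*(a - cnj a)"], rule exI[of _ "\<i>*(b - cnj c)"]) (simp add: algebra_simps)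
  moreover have "?g \<noteq> 0"
  proof
    assume "?g = 0"
    hence "\<i>*(a - cnj a) = 0" "\<i>*(b - cnj c) = 0" "\<i>*(c - cnj b) = 0" unfolding mk_zero mk_eq by blast+
    hence "a - cnj a = 0" "b - cnj c = 0" "c - cnj b = 0" by (simp_all only: mult_eq_0_iff complex_i_not_zero simp_thms)
    with True have "a = 0" "b = 0" "c = 0" by (auto simp: algebra_simps)
    with assms(4) show False by simp
  qed
  moreover have "mcomm (mk a b c (-a)) ?g = 0" unfolding comm_iff
    using assms(1-3) by (intro conjI; algebra)
  ultimately show ?thesis by blast
qed

theorem lemma3p7:
  fixes \<phi> :: cmat2
  assumes "\<phi> \<in> sl2C"
  shows "(bij_betw (Mop \<phi>) isu2 isu2 \<longleftrightarrow> mcomm \<phi> (ctransp \<phi>) \<noteq> 0)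
    \<and> ((mcomm \<phi> (ctransp \<phi>) = 0 \<and> \<phi> \<noteq> 0) \<longrightarrow>
         dim {\<gamma> \<in> isu2. Mop \<phi> \<gamma> = 0} = 1)"
proof -
  obtain a b c d where A0: "\<phi> = mk a b c d" by (rule mk_cases)
  have "d = -a" using assms unfolding A0 sl2C_def by (simp add: add_eq_0_iff2)
  hence A: "\<phi> = mk a b c (-a)" using A0 by simp
  have N: "mcomm \<phi> (ctransp \<phi>) = 0 \<longleftrightarrow> b*cnj b = c*cnj c \<and> a*cnj c = b*cnj a \<and> c*cnj a = a*cnj b"
    by (simp only: A mk_ctransp complex_cnj_minus comm_iff)
  have phi0: "\<phi> = 0 \<longleftrightarrow> a = 0 \<and> b = 0 \<and> c = 0" unfolding A mk_zero mk_eq by auto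
  have lin: "linear (Mop \<phi>)" by (rule Mop_linear)
  have ker: "\<And>\<gamma>. \<gamma> \<in> isu2 \<Longrightarrow> Mop \<phi> \<gamma> = 0 \<longleftrightarrow> mcomm \<phi> \<gamma> = 0" by (rule ker_iff)
  have cent: "\<exists>\<beta> x y. cnj x = x \<and> \<gamma> = mk x y (cnj y) (-x) \<and> x = \<beta>*a \<and> y = \<beta>*b \<and> cnj y = \<beta>*c"
    if H: "\<gamma> \<in> isu2" "Mop \<phi> \<gamma> = 0" "\<phi> \<noteq> 0" for \<gamma>
  proof -
    obtain x y where g: "cnj x = x" "\<gamma> = mk x y (cnj y) (-x)" using H(1) unfolding isu2_iff by blast
    have "mcomm \<phi> \<gamma> = 0" using ker[OF H(1)] H(2) by simp
    hence "b*cnj y = c*y \<and> a*y = b*x \<and> c*x = a*cnj y" unfolding A g(2) comm_iff .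
    hence "\<exists>\<beta>. x = \<beta>*a \<and> y = \<beta>*b \<and> cnj y = \<beta>*c"
    proof -
      have "\<not>(a = 0 \<and> b = 0 \<and> c = 0)" using H(3) phi0 by simp
      with \<open>b*cnj y = c*y \<and> a*y = b*x \<and> c*x = a*cnj y\<close> show ?thesis
        using centralizer[of a b c "cnj y" y x] by blast
    qed
    then obtain \<beta> where hb: "x = \<beta>*a \<and> y = \<beta>*b \<and> cnj y = \<beta>*c" by blast
    show ?thesis by (rule exI[of _ \<beta>], rule exI[of _ x], rule exI[of _ y]) (use g hb in blast)
  qed
  have part1: "bij_betw (Mop \<phi>) isu2 isu2" if nn: "mcomm \<phi> (ctransp \<phi>) \<noteq> 0"
  proof -
    have pn: "\<phi> \<noteq> 0" using nn by (auto simp: mcomm_def)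
    have triv: "\<gamma> = 0" if T: "\<gamma> \<in> isu2" "Mop \<phi> \<gamma> = 0" for \<gamma>
    proof (rule ccontr)
      assume gn: "\<gamma> \<noteq> 0"
      obtain \<beta> x y where h: "cnj x = x" "\<gamma> = mk x y (cnj y) (-x)" "x = \<beta>*a" "y = \<beta>*b" "cnj y = \<beta>*c"
        using cent[OF T pn] by blast
      have bn: "\<beta> \<noteq> 0" using gn h by (auto simp: mk_zero)
      hence cbn: "cnj \<beta> \<noteq> 0" by simp
      have e1: "\<beta>*c = cnj \<beta> * cnj b" using h(4,5) by simp
      have e2: "\<beta>*b = cnj \<beta> * cnj c" using h(4,5) by (metis complex_cnj_cnj complex_cnj_mult)
      have e3: "\<beta>*a = cnj \<beta> * cnj a" using h(1,3) by (metis complex_cnj_mult)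
      have "cnj \<beta> * (b*cnj b) = cnj \<beta> * (c*cnj c)"
        by (metis e1 e2 mult.assoc mult.commute)
      hence n1: "b*cnj b = c*cnj c" using cbn by simp
      have "cnj \<beta> * (a*cnj c) = cnj \<beta> * (b*cnj a)"
        by (metis e2 e3 mult.assoc mult.commute)
      hence n2: "a*cnj c = b*cnj a" using cbn by simp
      have "cnj \<beta> * (c*cnj a) = cnj \<beta> * (a*cnj b)"
        by (metis e1 e3 mult.assoc mult.commute)
      hence n3: "c*cnj a = a*cnj b" using cbn by simp
      show False using nn N n1 n2 n3 by blast
    qed
    have inj: "inj_on (Mop \<phi>) isu2"
    proof (rule inj_onI)
      fix x y assume xy: "x \<in> isu2" "y \<in> isu2" "Mop \<phi> x = Mop \<phi> y"
      have "x - y \<in> isu2" using subspace_isu2 xy by (simp add: subspace_diff)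
      moreover have "Mop \<phi> (x - y) = 0" using lin xy(3) by (simp add: linear_diff)
      ultimately show "x = y" using triv by force
    qed
    have img: "Mop \<phi> ` isu2 \<subseteq> isu2" using Mop_maps by blast
    have "Mop \<phi> ` isu2 = isu2"
    proof (rule subspace_dim_equal)
      show "subspace (Mop \<phi> ` isu2)" using lin subspace_isu2 by (rule linear_subspace_image)
      show "subspace isu2" by (rule subspace_isu2)
      show "Mop \<phi> ` isu2 \<subseteq> isu2" by (rule img)
      have "span isu2 = isu2" using subspace_isu2 by (simp add: span_eq_iff)
      hence "dim (Mop \<phi> ` isu2) = dim isu2" using dim_image_eq[OF lin, of isu2] inj by metis
      thus "dim isu2 \<le> dim (Mop \<phi> ` isu2)" by simp
    qed
    thus ?thesis using inj by (simp add: bij_betw_def)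
  qed
  have nz: "\<exists>g. g \<in> isu2 \<and> g \<noteq> 0 \<and> Mop \<phi> g = 0 \<and> (\<phi> \<noteq> 0 \<longrightarrow> mcomm \<phi> g = 0)"
    if n: "mcomm \<phi> (ctransp \<phi>) = 0"
  proof (cases "\<phi> = 0")
    case True
    let ?g = "mk 1 0 0 (-1)"
    have "?g \<in> isu2" unfolding isu2_iff by (rule exI[of _ 1], rule exI[of _ 0]) simp
    moreover have "?g \<noteq> 0" by (simp add: mk_zero)
    moreover have "Mop \<phi> ?g = 0" unfolding True Mop_def mcomm_def by (simp add: ctransp_def vec_eq_iff)
    ultimately show ?thesis using True by blast
  next
    case False
    then obtain g where "g \<in> isu2" "g \<noteq> 0" "mcomm \<phi> g = 0"
      using normal_kernel[of b c a] n N phi0 A by blast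
    thus ?thesis using ker by blast
  qed
  have part2: "\<not> bij_betw (Mop \<phi>) isu2 isu2" if n: "mcomm \<phi> (ctransp \<phi>) = 0"
  proof
    assume "bij_betw (Mop \<phi>) isu2 isu2"
    hence "inj_on (Mop \<phi>) isu2" by (simp add: bij_betw_def)
    moreover obtain g where "g \<in> isu2" "g \<noteq> 0" "Mop \<phi> g = 0" using nz n by blast
    moreover have "0 \<in> isu2" using subspace_isu2 by (simp add: subspace_0)
    moreover have "Mop \<phi> 0 = 0" using lin by (simp add: linear_0)
    ultimately show False by (metis inj_on_def)
  qed
  have part3: "dim {\<gamma> \<in> isu2. Mop \<phi> \<gamma> = 0} = 1" if n: "mcomm \<phi> (ctransp \<phi>) = 0" and pn: "\<phi> \<noteq> 0"
  proof -
    obtain g where g: "g \<in> isu2" "g \<noteq> 0" "Mop \<phi> g = 0" using nz n by blast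
    obtain \<beta>0 gx gy where hg: "cnj gx = gx" "g = mk gx gy (cnj gy) (-gx)" "gx = \<beta>0*a" "gy = \<beta>0*b" "cnj gy = \<beta>0*c"
      using cent[OF g(1) g(3) pn] by blast
    have b0: "\<beta>0 \<noteq> 0" using g(2) hg by (auto simp: mk_zero)
    have "{\<gamma> \<in> isu2. Mop \<phi> \<gamma> = 0} = range (\<lambda>r. r *\<^sub>R g)"
    proof (intro set_eqI iffI)
      fix \<gamma> assume "\<gamma> \<in> {\<gamma> \<in> isu2. Mop \<phi> \<gamma> = 0}"
      hence gm: "\<gamma> \<in> isu2" "Mop \<phi> \<gamma> = 0" by auto
      obtain \<beta> x y where h: "cnj x = x" "\<gamma> = mk x y (cnj y) (-x)" "x = \<beta>*a" "y = \<beta>*b" "cnj y = \<beta>*c"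
        using cent[OF gm pn] by blast
      define r where "r = \<beta> / \<beta>0"
      have ex: "x = r * gx" "y = r * gy" "cnj y = r * cnj gy"
        using h hg b0 by (simp_all add: r_def field_simps)
      have rr: "cnj r = r"
      proof (cases "gx = 0")
        case False
        have "cnj r * gx = r * gx" using ex(1) h(1) hg(1) by (metis complex_cnj_mult)
        thus ?thesis using False by simp
      next
        case True
        hence "gy \<noteq> 0" using g(2) hg(2) by (auto simp: mk_zero)
        have "cnj r * cnj gy = r * cnj gy" using ex(2,3) by (metis complex_cnj_mult)
        thus ?thesis using \<open>gy \<noteq> 0\<close> by simp
      qed
      hence "r = of_real (Re r)" by (metis Reals_cnj_iff of_real_Re)
      hence "\<gamma> = Re r *\<^sub>R g" unfolding h(2) hg(2) using ex
        by (simp add: sR)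
      thus "\<gamma> \<in> range (\<lambda>r. r *\<^sub>R g)" by blast
    next
      fix \<gamma> assume "\<gamma> \<in> range (\<lambda>r. r *\<^sub>R g)"
      then obtain r where "\<gamma> = r *\<^sub>R g" by blast
      moreover have "r *\<^sub>R g \<in> isu2" using subspace_isu2 g(1) by (simp add: subspace_scale)
      moreover have "Mop \<phi> (r *\<^sub>R g) = 0" using lin g(3) by (simp add: linear_scale)
      ultimately show "\<gamma> \<in> {\<gamma> \<in> isu2. Mop \<phi> \<gamma> = 0}" by simp
    qed
    hence "{\<gamma> \<in> isu2. Mop \<phi> \<gamma> = 0} = span {g}" by (simp add: span_singleton)
    thus ?thesis using g(2) by simp
  qed
  show ?thesis using part1 part2 part3 by blast
qed


end
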